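(* Let $n\ge2$, let $z_1,\dots,z_n$ be indeterminates, and let $m_2\ge1$, $m_1\ge0$ be integers. Let $d=(d_1,\dots,d_{m_2+m_1-1})$ consist of $m_2-1$ entries equal to $2$ followed by $m_1$ entries equal to $1$. Then \[ M(m_2,m_1,n)=\sum_{1\le i<j\le n}\mathrm{monomial}_{\mathrm{inc}}(d,i,j;n)\,(z_i-z_j)^2 . \]
   Context: With $N=m_1+m_2+1$ and sums over all $N$-tuples $(b_1,\dots,b_N)$ of pairwise distinct elements of $\{1,\dots,n\}$, \[ M(m_2,m_1,n)=\sum_{b} z_{b_1}^2\cdots z_{b_{m_2}}^2\,z_{b_{m_2+1}}\cdots z_{b_{m_2+m_1}}\;-\;\sum_{b} z_{b_1}^2\cdots z_{b_{m_2-1}}^2\,z_{b_{m_2}}z_{b_{m_2+1}}\cdots z_{b_{m_2+m_1+1}}. \] For a sequence $d=(d_1,\dots,d_l)$ of nonnegative integers and distinct $i,j$, $\mathrm{monomial}_{\mathrm{inc}}(d,i,j;n)=\sum_{b}\prod_{h=1}^l z_{b_h}^{d_h}$, the sum over all $l$-tuples $b$ of pairwise distinct elements of $\{1,\dots,n\}\setminus\{i,j\}$ (empty product $=1$). *)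

theory Defs
  imports Main
begin

definition distinct_tuple_sum :: "nat set \<Rightarrow> nat list \<Rightarrow> (nat \<Rightarrow> 'a::comm_ring_1) \<Rightarrow> 'a" where
  "distinct_tuple_sum S d z =
     (\<Sum>bs\<in>{bs. length bs = length d \<and> distinct bs \<and> set bs \<subseteq> S}.
        \<Prod>h<length d. z (bs ! h) ^ (d ! h))"

text \<open>M(m2,m1,n): both sums range over N-tuples, N = m1+m2+1; the exponent lists
  record the exponent of each b_h (0 for a tuple entry not appearing in the product).\<close>
definition M :: "nat \<Rightarrow> nat \<Rightarrow> nat \<Rightarrow> (nat \<Rightarrow> 'a::comm_ring_1) \<Rightarrow> 'a" where
  "M m2 m1 n z =
     distinct_tuple_sum {1..n} (replicate m2 2 @ replicate m1 1 @ [0]) z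
   - distinct_tuple_sum {1..n} (replicate (m2 - 1) 2 @ replicate (m1 + 2) 1) z"

definition monomial_inc :: "nat list \<Rightarrow> nat \<Rightarrow> nat \<Rightarrow> nat \<Rightarrow> (nat \<Rightarrow> 'a::comm_ring_1) \<Rightarrow> 'a" where
  "monomial_inc d i j n z = distinct_tuple_sum ({1..n} - {i, j}) d z"

end

theory Submission
  imports Defs
begin

definition tup :: "nat set \<Rightarrow> nat \<Rightarrow> nat list set" where
  "tup S L = {bs. length bs = L \<and> distinct bs \<and> set bs \<subseteq> S}"

lemma finite_tup: "finite S \<Longrightarrow> finite (tup S L)"
proof -
  assume "finite S"
  have "tup S L \<subseteq> {xs. set xs \<subseteq> S \<and> length xs = L}" unfolding tup_def by auto
  moreover have "finite {xs. set xs \<subseteq> S \<and> length xs = L}"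
    using finite_lists_length_eq[OF \<open>finite S\<close>] by simp
  ultimately show ?thesis by (rule finite_subset)
qed

definition pl :: "(nat \<Rightarrow> 'a::comm_ring_1) \<Rightarrow> nat list \<Rightarrow> nat list \<Rightarrow> 'a" where
  "pl z bs d = prod_list (map (\<lambda>(b,e). z b ^ e) (zip bs d))"

lemma prod_pl: "length bs = length d \<Longrightarrow> (\<Prod>h<length d. z (bs ! h) ^ (d ! h)) = pl z bs d"
proof (induction d arbitrary: bs)
  case Nil then show ?case by (simp add: pl_def)
next
  case (Cons a d)
  then obtain x bs' where bs: "bs = x # bs'" "length bs' = length d" by (cases bs) auto
  have "(\<Prod>h<length (a#d). z (bs ! h) ^ ((a#d) ! h)) =
        z x ^ a * (\<Prod>h<length d. z (bs' ! h) ^ (d ! h))"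
    unfolding bs length_Cons prod.lessThan_Suc_shift by simp
  also have "\<dots> = pl z bs (a#d)" using Cons.IH[OF bs(2)] bs by (simp add: pl_def)
  finally show ?case .
qed

lemma dts_pl: "distinct_tuple_sum S d z = (\<Sum>bs\<in>tup S (length d). pl z bs d)"
  unfolding distinct_tuple_sum_def tup_def
  by (rule sum.cong) (auto simp: prod_pl)

lemma pl_append: "length bs = length d \<Longrightarrow> pl z (bs @ cs) (d @ e) = pl z bs d * pl z cs e"
  by (simp add: pl_def)

lemma dtd_set: "set (drop k xs @ take k xs) = set xs"
proof -
  have "set xs = set (take k xs @ drop k xs)" by (simp only: append_take_drop_id)
  then show ?thesis by (simp only: set_append) blast
qed

lemma dtd_distinct: "distinct (drop k xs @ take k xs) = distinct xs"
proof -
  have "distinct xs = distinct (take k xs @ drop k xs)" by (simp only: append_take_drop_id)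
  also have "\<dots> = distinct (drop k xs @ take k xs)"
    by (simp only: distinct_append) blast
  finally show ?thesis by (rule sym)
qed

lemma dtd_length: "length (drop k xs @ take k xs) = length xs"
  by simp

lemma tup_rot: "xs \<in> tup S L \<Longrightarrow> drop k xs @ take k xs \<in> tup S L"
  unfolding tup_def mem_Collect_eq dtd_length dtd_distinct dtd_set by assumption

lemma dts_swap:
  assumes "finite S"
  shows "distinct_tuple_sum S (d @ e) z = distinct_tuple_sum S (e @ d) z"
proof -
  let ?l = "length d" and ?m = "length e"
  have "(\<Sum>bs\<in>tup S (length (d@e)). pl z bs (d@e)) = (\<Sum>cs\<in>tup S (length (e@d)). pl z cs (e@d))"
  proof (rule sum.reindex_bij_witness[where i = "\<lambda>cs. drop ?m cs @ take ?m cs"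
                                         and j = "\<lambda>bs. drop ?l bs @ take ?l bs"])
    fix bs assume "bs \<in> tup S (length (d@e))"
    then have "length bs = ?l + ?m" by (simp add: tup_def)
    then show "drop ?m (drop ?l bs @ take ?l bs) @ take ?m (drop ?l bs @ take ?l bs) = bs"
      by simp
  next
    fix bs assume "bs \<in> tup S (length (d@e))"
    then show "drop ?l bs @ take ?l bs \<in> tup S (length (e@d))"
      using tup_rot by (metis append_eq_conv_conj length_append add.commute)
  next
    fix cs assume "cs \<in> tup S (length (e@d))"
    then have "length cs = ?m + ?l" by (simp add: tup_def)
    then show "drop ?l (drop ?m cs @ take ?m cs) @ take ?l (drop ?m cs @ take ?m cs) = cs"
      by simp
  next
    fix cs assume "cs \<in> tup S (length (e@d))"
    then show "drop ?m cs @ take ?m cs \<in> tup S (length (d@e))"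
      using tup_rot by (metis length_append add.commute)
  next
    fix bs assume "bs \<in> tup S (length (d@e))"
    then have len: "length bs = ?l + ?m" by (simp add: tup_def)
    have "pl z bs (d@e) = pl z (take ?l bs @ drop ?l bs) (d@e)" by simp
    also have "\<dots> = pl z (take ?l bs) d * pl z (drop ?l bs) e"
      using len by (intro pl_append) simp
    also have "\<dots> = pl z (drop ?l bs @ take ?l bs) (e@d)"
      using len by (subst pl_append) (auto simp: mult.commute)
    finally show "pl z (drop ?l bs @ take ?l bs) (e@d) = pl z bs (d@e)" by simp
  qed
  then show ?thesis by (simp add: dts_pl)
qed

lemma tup_Suc: "tup S (Suc L) = (\<lambda>(x,bs). x#bs) ` (SIGMA x:S. tup (S-{x}) L)"
proof (rule set_eqI)
  fix xs :: "nat list"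
  show "xs \<in> tup S (Suc L) \<longleftrightarrow> xs \<in> (\<lambda>(x,bs). x#bs) ` (SIGMA x:S. tup (S-{x}) L)"
  proof (cases xs)
    case Nil then show ?thesis by (auto simp: tup_def)
  next
    case (Cons y ys)
    have "xs \<in> (\<lambda>(x,bs). x#bs) ` (SIGMA x:S. tup (S-{x}) L) \<longleftrightarrow> (y, ys) \<in> (SIGMA x:S. tup (S-{x}) L)"
      unfolding Cons by (auto simp: image_iff)
    then show ?thesis unfolding Cons by (auto simp: tup_def)
  qed
qed

lemma dts_Cons:
  assumes "finite S"
  shows "distinct_tuple_sum S (a # d) z = (\<Sum>x\<in>S. z x ^ a * distinct_tuple_sum (S - {x}) d z)"
proof -
  have inj: "inj_on (\<lambda>(x,bs). x#bs) (SIGMA x:S. tup (S-{x}) (length d))"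
    by (auto simp: inj_on_def)
  have "distinct_tuple_sum S (a # d) z = (\<Sum>bs\<in>tup S (Suc (length d)). pl z bs (a#d))"
    by (simp add: dts_pl)
  also have "\<dots> = (\<Sum>(x,bs)\<in>(SIGMA x:S. tup (S-{x}) (length d)). pl z (x # bs) (a#d))"
    unfolding tup_Suc sum.reindex[OF inj] by (intro sum.cong) auto
  also have "\<dots> = (\<Sum>x\<in>S. \<Sum>bs\<in>tup (S-{x}) (length d). pl z (x # bs) (a#d))"
    using assms by (subst sum.Sigma) (auto simp: finite_tup)
  also have "\<dots> = (\<Sum>x\<in>S. z x ^ a * distinct_tuple_sum (S - {x}) d z)"
    by (simp add: dts_pl pl_def sum_distrib_left)
  finally show ?thesis .
qed

lemma pair_split:
  fixes g :: "nat \<Rightarrow> nat \<Rightarrow> 'a::comm_ring_1"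
  shows "(\<Sum>x\<in>{1..n}. \<Sum>y\<in>{1..n}-{x}. g x y) = (\<Sum>i\<in>{1..n}. \<Sum>j\<in>{i<..n}. g i j + g j i)"
proof -
  have "(\<Sum>x\<in>{1..n}. \<Sum>y\<in>{1..n}-{x}. g x y) =
        (\<Sum>x\<in>{1..n}. \<Sum>y\<in>{1..n}. (if x < y then g x y else 0) + (if y < x then g x y else 0))"
  proof (rule sum.cong[OF refl])
    fix x assume "x \<in> {1..n::nat}"
    have "(\<Sum>y\<in>{1..n}. (if x < y then g x y else 0) + (if y < x then g x y else 0)) =
          (\<Sum>y\<in>{1..n}-{x}. (if x < y then g x y else 0) + (if y < x then g x y else 0))"
      by (rule sum.mono_neutral_right) auto
    also have "\<dots> = (\<Sum>y\<in>{1..n}-{x}. g x y)" by (rule sum.cong) auto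
    finally show "(\<Sum>y\<in>{1..n}-{x}. g x y) = (\<Sum>y\<in>{1..n}. (if x < y then g x y else 0) + (if y < x then g x y else 0))" by simp
  qed
  also have "\<dots> = (\<Sum>x\<in>{1..n}. \<Sum>y\<in>{1..n}. (if x < y then g x y else 0)) +
                  (\<Sum>y\<in>{1..n}. \<Sum>x\<in>{1..n}. (if y < x then g x y else 0))"
    by (simp only: sum.distrib sum.swap[of "\<lambda>x y. if y < x then g x y else 0"])
  also have "\<dots> = (\<Sum>i\<in>{1..n}. \<Sum>j\<in>{1..n}. (if i < j then g i j + g j i else 0))"
    by (simp only: sum.distrib[symmetric]) (intro sum.cong refl, simp)
  also have "\<dots> = (\<Sum>i\<in>{1..n}. \<Sum>j\<in>{i<..n}. g i j + g j i)"
  proof (rule sum.cong[OF refl])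
    fix i assume i: "i \<in> {1..n::nat}"
    have "(\<Sum>j\<in>{1..n}. (if i < j then g i j + g j i else 0)) = (\<Sum>j\<in>{1..n} \<inter> {j. i < j}. g i j + g j i)"
      by (simp add: sum.inter_restrict)
    also have "{1..n} \<inter> {j. i < j} = {i<..n}" using i by auto
    finally show "(\<Sum>j\<in>{1..n}. (if i < j then g i j + g j i else 0)) = (\<Sum>j\<in>{i<..n}. g i j + g j i)" .
  qed
  finally show ?thesis .
qed

theorem lemma3p7:
  fixes z :: "nat \<Rightarrow> 'a::comm_ring_1"
    and n m1 m2 :: nat
  assumes "n \<ge> 2" and "m2 \<ge> 1"
  shows "M m2 m1 n z =
    (\<Sum>i\<in>{1..n}. \<Sum>j\<in>{i<..n}.
       monomial_inc (replicate (m2 - 1) 2 @ replicate m1 1) i j n z * (z i - z j)^2)"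
proof -
  define d :: "nat list" where "d = replicate (m2 - 1) 2 @ replicate m1 1"
  define S :: "nat set" where "S = {1..n}"
  define D where "D x y = distinct_tuple_sum (S - {x} - {y}) d z" for x y
  have fin: "finite (S - {x})" for x unfolding S_def by simp
  have Dsym: "D x y = D y x" for x y unfolding D_def by (simp add: insert_commute Diff_insert[symmetric])
  have e1: "replicate m2 2 @ replicate m1 1 @ [0] = 2 # (d @ [0])"
    using assms(2) unfolding d_def by (cases m2) auto
  have e2: "replicate (m2 - 1) 2 @ replicate (m1 + 2) 1 = d @ [1,1]"
    unfolding d_def by (simp only: replicate_add append_assoc) (simp add: numeral_2_eq_2)
  have A: "distinct_tuple_sum S (replicate m2 2 @ replicate m1 1 @ [0]) z =
           (\<Sum>x\<in>S. \<Sum>y\<in>S-{x}. z x ^ 2 * D x y)"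
    unfolding e1 D_def
    by (simp add: dts_Cons S_def dts_swap[where e = "[0]", simplified] sum_distrib_left)
  have B: "distinct_tuple_sum S (replicate (m2 - 1) 2 @ replicate (m1 + 2) 1) z =
           (\<Sum>x\<in>S. \<Sum>y\<in>S-{x}. z x * z y * D x y)"
    unfolding e2 D_def
    by (simp add: dts_Cons S_def dts_swap[where e = "[1,1]", simplified] sum_distrib_left mult.assoc)
  have "M m2 m1 n z = (\<Sum>x\<in>S. \<Sum>y\<in>S-{x}. z x ^ 2 * D x y - z x * z y * D x y)"
    unfolding M_def S_def[symmetric] A B by (simp add: sum_subtractf)
  also have "\<dots> = (\<Sum>i\<in>S. \<Sum>j\<in>{i<..n}. (z i ^ 2 * D i j - z i * z j * D i j) + (z j ^ 2 * D j i - z j * z i * D j i))"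
    unfolding S_def by (rule pair_split)
  also have "\<dots> = (\<Sum>i\<in>S. \<Sum>j\<in>{i<..n}. monomial_inc d i j n z * (z i - z j)^2)"
    unfolding monomial_inc_def D_def S_def
    by (intro sum.cong refl) (simp add: insert_commute Diff_insert[symmetric] power2_eq_square algebra_simps)
  finally show ?thesis unfolding S_def d_def .
qed

end
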